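(* Let $\mu$ be a PTP-monotone. If $A\in H_n$ and $B\in H_k$ satisfy $\|A_+\|_1=\|B_+\|_1$ and $\|A_-\|_1=\|B_-\|_1$, then $\mu(A)=\mu(B)$; i.e. $\mu(A)$ is a function of $(\|A_+\|_1,\|A_-\|_1)$.
   Context: $H_n$ denotes the $n\times n$ complex Hermitian matrices. A linear map $\Phi:H_n\to H_k$ is PTP if it maps positive semidefinite matrices to positive semidefinite matrices and $\operatorname{tr}\Phi(X)=\operatorname{tr}X$ for all $X$. A function $\mu:\bigcup_{n\in\mathbb N}H_n\to\mathbb R$ is a PTP-monotone if $\mu(\Phi(A))\leq\mu(A)$ for all $n,k$, all PTP maps $\Phi:H_n\to H_k$ and all $A\in H_n$. Every $A$ decomposes uniquely as $A=A_+-A_-$ with $A_\pm$ positive semidefinite and $A_+A_-=0$. $\|\cdot\|_1$ is the trace norm. *)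

theory Defs
  imports "Jordan_Normal_Form.Schur_Decomposition" "Jordan_Normal_Form.Char_Poly"
begin

text \<open>Matrices of varying size are modelled by the type complex mat of
  Jordan_Normal_Form; H_n is the set of n x n Hermitian complex matrices.\<close>

definition hermitian_mat :: "nat \<Rightarrow> complex mat \<Rightarrow> bool" where
  "hermitian_mat n A \<longleftrightarrow> A \<in> carrier_mat n n \<and> mat_adjoint A = A"

definition mtrace :: "complex mat \<Rightarrow> complex" where
  "mtrace A = (\<Sum>i<dim_row A. A $$ (i, i))"

definition psd_mat :: "nat \<Rightarrow> complex mat \<Rightarrow> bool" where
  "psd_mat n A \<longleftrightarrow> hermitian_mat n A \<and>
     (\<forall>v \<in> carrier_vec n. Re ((A *\<^sub>v v) \<bullet>c v) \<ge> 0)"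

definition ptp_map :: "nat \<Rightarrow> nat \<Rightarrow> (complex mat \<Rightarrow> complex mat) \<Rightarrow> bool" where
  "ptp_map n k \<Phi> \<longleftrightarrow>
     (\<forall>X. hermitian_mat n X \<longrightarrow> hermitian_mat k (\<Phi> X)) \<and>
     (\<forall>X Y (a::real) (b::real). hermitian_mat n X \<longrightarrow> hermitian_mat n Y \<longrightarrow>
        \<Phi> (complex_of_real a \<cdot>\<^sub>m X + complex_of_real b \<cdot>\<^sub>m Y)
          = complex_of_real a \<cdot>\<^sub>m \<Phi> X + complex_of_real b \<cdot>\<^sub>m \<Phi> Y) \<and>
     (\<forall>X. psd_mat n X \<longrightarrow> psd_mat k (\<Phi> X)) \<and>
     (\<forall>X. hermitian_mat n X \<longrightarrow> mtrace (\<Phi> X) = mtrace X)"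

definition ptp_monotone :: "(complex mat \<Rightarrow> real) \<Rightarrow> bool" where
  "ptp_monotone \<mu> \<longleftrightarrow>
     (\<forall>n k \<Phi> A. 0 < n \<longrightarrow> 0 < k \<longrightarrow> ptp_map n k \<Phi> \<longrightarrow> hermitian_mat n A \<longrightarrow>
        \<mu> (\<Phi> A) \<le> \<mu> A)"

definition jordan_parts :: "complex mat \<Rightarrow> complex mat \<times> complex mat" where
  "jordan_parts A = (THE (P, N). psd_mat (dim_row A) P \<and> psd_mat (dim_row A) N \<and>
       A = P - N \<and> P * N = 0\<^sub>m (dim_row A) (dim_row A))"

definition pos_part :: "complex mat \<Rightarrow> complex mat" where
  "pos_part A = fst (jordan_parts A)"

definition neg_part :: "complex mat \<Rightarrow> complex mat" where
  "neg_part A = snd (jordan_parts A)"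

text \<open>Trace norm: sum of singular values, i.e. of square roots of the eigenvalues
  (with algebraic multiplicity) of X* X.\<close>
definition trace_norm :: "complex mat \<Rightarrow> real" where
  "trace_norm X = (let p = char_poly (mat_adjoint X * X) in
     \<Sum>z \<in> {z. poly p z = 0}. real (order z p) * sqrt (Re z))"

end

theory Submission
  imports Defs "Jordan_Normal_Form.Spectral_Radius"
begin

lemma mult_entry:
  assumes "A \<in> carrier_mat n m" "B \<in> carrier_mat m p" "i < n" "j < p"
  shows "(A * B) $$ (i,j) = (\<Sum>k<m. A $$ (i,k) * B $$ (k,j))"
  using assms by (simp add: scalar_prod_def atLeast0LessThan)

lemma adj_carrier[simp]: "A \<in> carrier_mat n m \<Longrightarrow> mat_adjoint A \<in> carrier_mat m n"
  unfolding mat_adjoint_def by (auto simp: mat_of_rows_def)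

lemma mult_carrier_sq[simp]: "A \<in> carrier_mat n n \<Longrightarrow> B \<in> carrier_mat n n \<Longrightarrow> A * B \<in> carrier_mat n n"
  by (rule mult_carrier_mat)

lemma adj_carrier_sq[simp]: "A \<in> carrier_mat n n \<Longrightarrow> mat_adjoint A \<in> carrier_mat n n"
  by (rule adj_carrier)

lemma adj_dims[simp]: "dim_row (mat_adjoint A) = dim_col A" "dim_col (mat_adjoint A) = dim_row A"
  unfolding mat_adjoint_def by (auto simp: mat_of_rows_def)

lemma adj_entry[simp]: "i < dim_col A \<Longrightarrow> j < dim_row A \<Longrightarrow>
   mat_adjoint A $$ (i,j) = cnj (A $$ (j,i))"
  unfolding mat_adjoint_def by (simp add: mat_of_rows_index)

lemma adj_adj[simp]: "mat_adjoint (mat_adjoint (A::complex mat)) = A"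
  by (rule eq_matI, auto)

lemma adj_mult: assumes "A \<in> carrier_mat n m" "B \<in> carrier_mat m p"
  shows "mat_adjoint (A * B) = mat_adjoint B * mat_adjoint (A::complex mat)"
proof (rule eq_matI)
  fix i j assume "i < dim_row (mat_adjoint B * mat_adjoint A)" "j < dim_col (mat_adjoint B * mat_adjoint A)"
  then have ij: "i < p" "j < n" using assms by auto
  show "mat_adjoint (A * B) $$ (i, j) = (mat_adjoint B * mat_adjoint A) $$ (i, j)"
  proof -
    have "mat_adjoint (A * B) $$ (i, j) = cnj ((A*B) $$ (j,i))" using assms ij by simp
    also have "\<dots> = cnj (\<Sum>k<m. A $$ (j,k) * B $$ (k,i))" using mult_entry[OF assms ij(2) ij(1)] by simp
    also have "\<dots> = (\<Sum>k<m. mat_adjoint B $$ (i,k) * mat_adjoint A $$ (k,j))"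
      using assms ij by (simp add: mult.commute)
    also have "\<dots> = (mat_adjoint B * mat_adjoint A) $$ (i, j)"
      using mult_entry[of "mat_adjoint B" p m "mat_adjoint A" n i j] assms ij by simp
    finally show ?thesis .
  qed
qed (use assms in auto)

lemma adj_add: assumes "A \<in> carrier_mat n m" "B \<in> carrier_mat n m"
  shows "mat_adjoint (A + B) = mat_adjoint A + mat_adjoint (B::complex mat)"
  by (rule eq_matI, use assms in auto)

lemma adj_smult: "mat_adjoint (c \<cdot>\<^sub>m (A::complex mat)) = cnj c \<cdot>\<^sub>m mat_adjoint A"
  by (rule eq_matI, auto)

lemma adj_one[simp]: "mat_adjoint (1\<^sub>m n :: complex mat) = 1\<^sub>m n"
  by (rule eq_matI, auto)

lemma hermitian_iff: "hermitian_mat n A \<longleftrightarrow> A \<in> carrier_mat n n \<and>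
   (\<forall>i<n. \<forall>j<n. A $$ (i,j) = cnj (A $$ (j,i)))"
proof
  assume "hermitian_mat n A"
  then have A: "A \<in> carrier_mat n n" and e: "mat_adjoint A = A" unfolding hermitian_mat_def by auto
  show "A \<in> carrier_mat n n \<and> (\<forall>i<n. \<forall>j<n. A $$ (i,j) = cnj (A $$ (j,i)))"
  proof (intro conjI allI impI A)
    fix i j assume "i < n" "j < n"
    then have "mat_adjoint A $$ (i,j) = cnj (A $$ (j,i))" using A by simp
    then show "A $$ (i,j) = cnj (A $$ (j,i))" using e by metis
  qed
next
  assume h: "A \<in> carrier_mat n n \<and> (\<forall>i<n. \<forall>j<n. A $$ (i,j) = cnj (A $$ (j,i)))"
  then have A: "A \<in> carrier_mat n n" and h2: "\<And>i j. i<n \<Longrightarrow> j<n \<Longrightarrow> A $$ (i,j) = cnj (A $$ (j,i))"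
    by blast+
  show "hermitian_mat n A" unfolding hermitian_mat_def
  proof (rule conjI)
    show "A \<in> carrier_mat n n" using A by simp
    show "mat_adjoint A = A"
    proof (rule eq_matI)
      fix i j assume "i < dim_row A" "j < dim_col A"
      then have ij: "i < n" "j < n" using A by auto
      then have "mat_adjoint A $$ (i, j) = cnj (A $$ (j,i))" using A by simp
      also have "\<dots> = A $$ (i,j)" using h2[OF ij] by simp
      finally show "mat_adjoint A $$ (i, j) = A $$ (i, j)" .
    qed (use A in auto)
  qed
qed

definition qf :: "complex mat \<Rightarrow> complex vec \<Rightarrow> complex" where
  "qf X v = (X *\<^sub>v v) \<bullet>c v"

lemma qf_sum: assumes "X \<in> carrier_mat n n" "v \<in> carrier_vec n"
  shows "qf X v = (\<Sum>i<n. \<Sum>j<n. X $$ (i,j) * v $ j * cnj (v $ i))"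
  using assms unfolding qf_def
  by (simp add: scalar_prod_def atLeast0LessThan sum_distrib_right)

lemma psd_iff: "psd_mat n A \<longleftrightarrow> hermitian_mat n A \<and> (\<forall>v\<in>carrier_vec n. Re (qf A v) \<ge> 0)"
  unfolding psd_mat_def qf_def by simp


lemma cprod_smult: assumes "x \<in> carrier_vec n" "y \<in> carrier_vec n"
  shows "(a \<cdot>\<^sub>v x) \<bullet>c (b \<cdot>\<^sub>v y) = a * cnj b * (x \<bullet>c (y::complex vec))"
  using assms by (simp add: scalar_prod_def sum_distrib_left algebra_simps)

lemma cprod_self_real: assumes "x \<in> carrier_vec n" "x \<noteq> 0\<^sub>v n"
  shows "x \<bullet>c x = complex_of_real (Re (x \<bullet>c x)) \<and> Re (x \<bullet>c (x::complex vec)) > 0"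
proof -
  have "x \<bullet>c x > 0" using assms by simp
  then show ?thesis by (simp add: less_complex_def complex_eq_iff)
qed

lemma onb_first: assumes v: "v \<in> carrier_vec n" and v1: "v \<bullet>c v = (1::complex)"
  shows "\<exists>us. length us = n \<and> set us \<subseteq> carrier_vec n \<and>
     (\<forall>i<n. \<forall>j<n. us!i \<bullet>c us!j = (if i=j then 1 else 0)) \<and> us!0 = v"
proof -
  interpret cof_vec_space n "TYPE(complex)" .
  have v0: "v \<noteq> 0\<^sub>v n" using v1 v by auto
  define b where "b = basis_completion v"
  define ws where "ws = gram_schmidt n b"
  from basis_completion[OF v v0, folded b_def]
  have dist_b: "distinct b" 
    and indep: "\<not> lin_dep (set b)" and b: "set b \<subseteq> carrier_vec n" and hdb: "hd b = v" 
    and len_b: "length b = n" by auto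
  have n: "n \<noteq> 0" using v v0 by (auto intro!: eq_vecI)
  from hdb len_b n obtain vs where bv: "b = v # vs" by (cases b, auto)
  from gram_schmidt_result[OF b dist_b indep refl, folded ws_def]
  have ws: "set ws \<subseteq> carrier_vec n" "corthogonal ws" "length ws = n" 
    by (auto simp: len_b)
  from gram_schmidt_hd[OF v, of vs, folded bv] have hdws: "hd ws = v" unfolding ws_def .
  have ws0: "ws ! 0 = v" using hdws ws(3) n by (cases ws, auto)
  define nr where "nr = (\<lambda>w::complex vec. sqrt (Re (w \<bullet>c w)))"
  define us where "us = map (\<lambda>w. complex_of_real (1 / nr w) \<cdot>\<^sub>v w) ws"
  have wsc: "\<And>i. i < n \<Longrightarrow> ws ! i \<in> carrier_vec n" using ws by auto
  have wsnz: "\<And>i. i < n \<Longrightarrow> ws ! i \<bullet>c ws ! i \<noteq> 0" using ws(2,3) corthogonalD by blast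
  have wsz: "\<And>i j. i < n \<Longrightarrow> j < n \<Longrightarrow> i \<noteq> j \<Longrightarrow> ws ! i \<bullet>c ws ! j = 0"
    using ws(2,3) corthogonalD by blast
  have orth: "\<forall>i<n. \<forall>j<n. us!i \<bullet>c us!j = (if i=j then 1 else 0)"
  proof (intro allI impI)
    fix i j assume i: "i < n" and j: "j < n"
    have e: "us!i \<bullet>c us!j = complex_of_real (1 / nr (ws!i)) * cnj (complex_of_real (1 / nr (ws!j))) * (ws!i \<bullet>c ws!j)"
      unfolding us_def using i j ws(3) by (simp add: cprod_smult[OF wsc[OF i] wsc[OF j]])
    show "us!i \<bullet>c us!j = (if i=j then 1 else 0)"
    proof (cases "i = j")
      case True
      have nz: "ws ! i \<noteq> 0\<^sub>v n" using wsnz[OF i] wsc[OF i] by auto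
      from cprod_self_real[OF wsc[OF i] nz] 
      have r: "ws ! i \<bullet>c ws ! i = complex_of_real (Re (ws ! i \<bullet>c ws ! i))" "Re (ws ! i \<bullet>c ws ! i) > 0" by auto
      have "us!i \<bullet>c us!j = complex_of_real ((1 / nr (ws!i)) * (1 / nr (ws!i)) * Re (ws ! i \<bullet>c ws ! i))"
        using e True r(1) by (metis complex_cnj_complex_of_real of_real_mult)
      also have "(1 / nr (ws!i)) * (1 / nr (ws!i)) * Re (ws ! i \<bullet>c ws ! i) = 1"
        using r(2) unfolding nr_def by (simp add: field_simps)
      finally show ?thesis using True by simp
    next
      case False
      then show ?thesis using e wsz[OF i j] by simp
    qed
  qed
  have "nr v = 1" unfolding nr_def using v1 by simp
  then have us0: "us ! 0 = v" unfolding us_def using ws0 ws(3) n by simp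
  have "length us = n" "set us \<subseteq> carrier_vec n" unfolding us_def using ws by auto
  then show ?thesis using orth us0 by blast
qed


definition unitary :: "nat \<Rightarrow> complex mat \<Rightarrow> bool" where
  "unitary n U \<longleftrightarrow> U \<in> carrier_mat n n \<and> mat_adjoint U * U = 1\<^sub>m n"

lemma unitary_carrier: "unitary n U \<Longrightarrow> U \<in> carrier_mat n n"
  unfolding unitary_def by simp

lemma unitary_left: "unitary n U \<Longrightarrow> mat_adjoint U * U = 1\<^sub>m n"
  unfolding unitary_def by simp

lemma unitary_right: "unitary n U \<Longrightarrow> U * mat_adjoint U = 1\<^sub>m n"
  unfolding unitary_def using mat_mult_left_right_inverse[of "mat_adjoint U" n U] by auto

lemma unitary_mult: assumes "unitary n U" "unitary n V" shows "unitary n (U * V)"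
proof -
  have U: "U \<in> carrier_mat n n" and V: "V \<in> carrier_mat n n"
    using assms unitary_carrier by auto
  have "mat_adjoint (U * V) * (U * V) = mat_adjoint V * (mat_adjoint U * (U * V))"
    by (subst adj_mult[OF U V], rule assoc_mult_mat[of _ n n _ n _ n], use U V in auto)
  also have "mat_adjoint U * (U * V) = (mat_adjoint U * U) * V"
    using U V by (simp add: assoc_mult_mat[of _ n n _ n _ n])
  also have "mat_adjoint V * ((mat_adjoint U * U) * V) = 1\<^sub>m n"
    using unitary_left[OF assms(1)] unitary_left[OF assms(2)] V by simp
  finally show ?thesis unfolding unitary_def using U V by simp
qed

definition diagm :: "nat \<Rightarrow> (nat \<Rightarrow> real) \<Rightarrow> complex mat" where
  "diagm n d = mat n n (\<lambda>(i,j). if i = j then complex_of_real (d i) else 0)"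

lemma diagm_carrier[simp]: "diagm n d \<in> carrier_mat n n"
  unfolding diagm_def by simp

lemma diagm_dims[simp]: "dim_row (diagm n d) = n" "dim_col (diagm n d) = n"
  unfolding diagm_def by simp_all

definition ext1 :: "nat \<Rightarrow> complex \<Rightarrow> complex mat \<Rightarrow> complex mat" where
  "ext1 m a M = mat (Suc m) (Suc m) (\<lambda>(i,j). if i = 0 \<and> j = 0 then a else
      if i = 0 \<or> j = 0 then 0 else M $$ (i - 1, j - 1))"

lemma ext1_carrier[simp]: "ext1 m a M \<in> carrier_mat (Suc m) (Suc m)"
  unfolding ext1_def by simp

lemma ext1_dims[simp]: "dim_row (ext1 m a M) = Suc m" "dim_col (ext1 m a M) = Suc m"
  unfolding ext1_def by simp_all

lemma ext1_mult: assumes X: "X \<in> carrier_mat m m" and Y: "Y \<in> carrier_mat m m"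
  shows "ext1 m a X * ext1 m b Y = ext1 m (a * b) (X * Y)"
proof (rule eq_matI)
  fix i j assume "i < dim_row (ext1 m (a * b) (X * Y))" "j < dim_col (ext1 m (a * b) (X * Y))"
  then have i: "i < Suc m" and j: "j < Suc m" by (auto simp: ext1_def)
  have "(ext1 m a X * ext1 m b Y) $$ (i,j) = (\<Sum>k<Suc m. ext1 m a X $$ (i,k) * ext1 m b Y $$ (k,j))"
    using mult_entry[OF ext1_carrier ext1_carrier i j] .
  also have "\<dots> = ext1 m a X $$ (i,0) * ext1 m b Y $$ (0,j) + (\<Sum>k<m. ext1 m a X $$ (i,Suc k) * ext1 m b Y $$ (Suc k,j))"
    by (simp only: sum.lessThan_Suc_shift)
  also have "\<dots> = ext1 m (a * b) (X * Y) $$ (i,j)"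
  proof (cases i)
    case 0
    then show ?thesis using j by (cases j, auto simp: ext1_def)
  next
    case (Suc i')
    then show ?thesis using i j X Y
      by (cases j, auto simp: ext1_def scalar_prod_def atLeast0LessThan)
  qed
  finally show "(ext1 m a X * ext1 m b Y) $$ (i,j) = ext1 m (a * b) (X * Y) $$ (i,j)" .
qed (auto simp: ext1_def)

lemma ext1_adj: assumes X: "X \<in> carrier_mat m m"
  shows "mat_adjoint (ext1 m a X) = ext1 m (cnj a) (mat_adjoint X)"
  by (rule eq_matI, use X in \<open>auto simp: ext1_def\<close>)

lemma ext1_one: "ext1 m 1 (1\<^sub>m m) = 1\<^sub>m (Suc m)"
  by (rule eq_matI, auto simp: ext1_def)

lemma ext1_diag: "ext1 m (complex_of_real r) (diagm m d) = diagm (Suc m) (\<lambda>i. if i = 0 then r else d (i - 1))"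
  by (rule eq_matI, auto simp: ext1_def diagm_def)

lemma ext1_unitary: "unitary m U \<Longrightarrow> unitary (Suc m) (ext1 m 1 U)"
  unfolding unitary_def using ext1_adj ext1_mult ext1_one by (simp add: ext1_adj ext1_mult)


lemma spectral: "hermitian_mat n A \<Longrightarrow> \<exists>U d. unitary n U \<and> A = U * diagm n d * mat_adjoint U"
proof (induction n arbitrary: A)
  case 0
  then have A: "A \<in> carrier_mat 0 0" unfolding hermitian_mat_def by simp
  have "unitary 0 (1\<^sub>m 0)" unfolding unitary_def by simp
  moreover have "A = 1\<^sub>m 0 * diagm 0 (\<lambda>_. 0) * mat_adjoint (1\<^sub>m 0)"
    by (rule eq_matI, use A in auto)
  ultimately show ?case by blast
next
  case (Suc m)
  define n where "n = Suc m"
  have A: "A \<in> carrier_mat n n" using Suc.prems unfolding hermitian_mat_def n_def by simp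
  have Aadj: "mat_adjoint A = A" using Suc.prems unfolding hermitian_mat_def by simp
  obtain e where "e \<in> spectrum A" using spectrum_non_empty[OF A] n_def by auto
  then have ev: "eigenvalue A e" unfolding spectrum_def by simp
  define v0 where "v0 = find_eigenvector A e"
  have "eigenvector A v0 e" using find_eigenvector[OF A ev] unfolding v0_def .
  then have v0: "v0 \<in> carrier_vec n" "v0 \<noteq> 0\<^sub>v n" "A *\<^sub>v v0 = e \<cdot>\<^sub>v v0"
    unfolding eigenvector_def using A by auto
  define c where "c = complex_of_real (1 / sqrt (Re (v0 \<bullet>c v0)))"
  define v where "v = c \<cdot>\<^sub>v v0"
  have vc: "v \<in> carrier_vec n" unfolding v_def using v0 by simp
  from cprod_self_real[OF v0(1,2)]
  have r: "v0 \<bullet>c v0 = complex_of_real (Re (v0 \<bullet>c v0))" "Re (v0 \<bullet>c v0) > 0" by auto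
  have "v \<bullet>c v = c * cnj c * (v0 \<bullet>c v0)" unfolding v_def using cprod_smult[OF v0(1) v0(1)] .
  also have "\<dots> = 1"
  proof -
    define R where "R = Re (v0 \<bullet>c v0)"
    have R: "v0 \<bullet>c v0 = complex_of_real R" "R > 0" using r unfolding R_def by auto
    have "c * cnj c * (v0 \<bullet>c v0) = complex_of_real ((1 / sqrt R) * (1 / sqrt R) * R)"
      unfolding c_def R(1) R_def[symmetric] by (simp only: complex_cnj_complex_of_real of_real_mult Re_complex_of_real)
    also have "(1 / sqrt R) * (1 / sqrt R) * R = 1" using R(2) by (simp add: field_simps)
    finally show ?thesis by simp
  qed
  finally have v1: "v \<bullet>c v = 1" .
  have Av: "A *\<^sub>v v = e \<cdot>\<^sub>v v" unfolding v_def using v0 A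
    by (simp add: mult_mat_vec[OF A v0(1)] smult_smult_assoc mult.commute)
  obtain us where us: "length us = n" "set us \<subseteq> carrier_vec n"
     "\<And>i j. i<n \<Longrightarrow> j<n \<Longrightarrow> us!i \<bullet>c us!j = (if i=j then 1 else 0)" "us!0 = v"
    using onb_first[OF vc v1] by blast
  define W where "W = mat_of_cols n us"
  have W: "W \<in> carrier_mat n n" unfolding W_def using mat_of_cols_carrier(1)[of n us] us(1) by simp
  have Wentry: "\<And>k i. k < n \<Longrightarrow> i < n \<Longrightarrow> W $$ (k,i) = us ! i $ k"
    unfolding W_def using us by (simp add: mat_of_cols_def)
  have usc: "\<And>i. i < n \<Longrightarrow> us ! i \<in> carrier_vec n" using us by auto
  have WU: "unitary n W" unfolding unitary_def
  proof (intro conjI W eq_matI)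
    fix i j assume "i < dim_row (1\<^sub>m n :: complex mat)" "j < dim_col (1\<^sub>m n :: complex mat)"
    then have i: "i < n" and j: "j < n" by auto
    have "(mat_adjoint W * W) $$ (i,j) = (\<Sum>k<n. mat_adjoint W $$ (i,k) * W $$ (k,j))"
      using mult_entry[OF adj_carrier[OF W] W i j] .
    also have "\<dots> = (\<Sum>k<n. us ! j $ k * cnj (us ! i $ k))"
      using W i j by (simp add: Wentry mult.commute)
    also have "\<dots> = us ! j \<bullet>c us ! i" using usc[OF i] usc[OF j] 
      by (simp add: scalar_prod_def atLeast0LessThan)
    also have "\<dots> = 1\<^sub>m n $$ (i,j)" using us(3)[OF j i] i j by simp
    finally show "(mat_adjoint W * W) $$ (i,j) = 1\<^sub>m n $$ (i,j)" .
  qed (use W in auto)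
  define A' where "A' = mat_adjoint W * (A * W)"
  have A'c: "A' \<in> carrier_mat n n" unfolding A'_def using W A by (meson adj_carrier mult_carrier_mat)
  have A'h: "hermitian_mat n A'" unfolding hermitian_mat_def
  proof (intro conjI A'c)
    show "mat_adjoint A' = A'" unfolding A'_def
      using adj_mult[OF adj_carrier[OF W] mult_carrier_mat[OF A W]] adj_mult[OF A W] Aadj W A
      by (simp add: assoc_mult_mat[of _ n n _ n _ n])
  qed
  have col0: "\<And>i. i < n \<Longrightarrow> A' $$ (i,0) = (if i = 0 then e else 0)"
  proof -
    fix i assume i: "i < n"
    have n0: "0 < n" unfolding n_def by simp
    have AW: "\<And>k. k < n \<Longrightarrow> (A * W) $$ (k,0) = e * v $ k"
    proof -
      fix k assume k: "k < n"
      have "col W 0 = v" unfolding W_def using col_mat_of_cols[of 0 us n] us(1,4) usc[OF n0] n0 by simp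
      then have "(A * W) $$ (k,0) = (A *\<^sub>v v) $ k" using A W k n0 by simp
      then show "(A * W) $$ (k,0) = e * v $ k" using Av k vc by simp
    qed
    have "A' $$ (i,0) = (\<Sum>k<n. mat_adjoint W $$ (i,k) * (A * W) $$ (k,0))"
      unfolding A'_def using mult_entry[OF adj_carrier[OF W] mult_carrier_mat[OF A W] i n0] .
    also have "\<dots> = (\<Sum>k<n. e * (v $ k * cnj (us ! i $ k)))"
      using W i by (intro sum.cong[OF refl]) (simp add: Wentry AW)
    also have "\<dots> = e * (us ! 0 \<bullet>c us ! i)" using usc[OF i] vc us(4)
      by (simp add: scalar_prod_def atLeast0LessThan sum_distrib_left)
    also have "\<dots> = (if i = 0 then e else 0)" using us(3)[OF n0 i] by simp
    finally show "A' $$ (i,0) = (if i = 0 then e else 0)" .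
  qed
  have A'herm: "\<And>i j. i < n \<Longrightarrow> j < n \<Longrightarrow> A' $$ (i,j) = cnj (A' $$ (j,i))"
    using A'h unfolding hermitian_iff by blast
  have n0: "0 < n" unfolding n_def by simp
  have ce: "cnj e = e"
  proof -
    have h: "A' $$ (0,0) = e" using col0[OF n0] by simp
    show "cnj e = e" using A'herm[OF n0 n0] unfolding h by simp
  qed
  have "Im (cnj e) = Im e" using ce by simp
  then have "Im e = 0" by simp
  then have ereal: "e = complex_of_real (Re e)" by (simp add: complex_eq_iff)
  have row0: "\<And>j. j < n \<Longrightarrow> A' $$ (0,j) = (if j = 0 then e else 0)"
  proof -
    fix j assume j: "j < n"
    have "A' $$ (0,j) = cnj (A' $$ (j,0))" using A'herm[OF n0 j] .
    also have "\<dots> = (if j = 0 then e else 0)" unfolding col0[OF j] using ce by simp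
    finally show "A' $$ (0,j) = (if j = 0 then e else 0)" .
  qed
  define A3 where "A3 = mat m m (\<lambda>(i,j). A' $$ (Suc i, Suc j))"
  have A3h: "hermitian_mat m A3" unfolding hermitian_iff
  proof (intro conjI allI impI)
    show "A3 \<in> carrier_mat m m" unfolding A3_def by simp
    fix i j assume "i < m" "j < m"
    then have "A3 $$ (i,j) = A' $$ (Suc i, Suc j)" "A3 $$ (j,i) = A' $$ (Suc j, Suc i)"
      "Suc i < n" "Suc j < n" unfolding A3_def n_def by simp_all
    then show "A3 $$ (i, j) = cnj (A3 $$ (j, i))" using A'herm[of "Suc i" "Suc j"] by simp
  qed
  obtain U3 d3 where U3: "unitary m U3" "A3 = U3 * diagm m d3 * mat_adjoint U3"
    using Suc.IH[OF A3h] by blast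
  have U3c: "U3 \<in> carrier_mat m m" using U3 unitary_carrier by blast
  have A'ext: "A' = ext1 m e A3"
  proof (rule eq_matI)
    fix i j assume "i < dim_row (ext1 m e A3)" "j < dim_col (ext1 m e A3)"
    then have i: "i < n" and j: "j < n" unfolding n_def ext1_def by auto
    show "A' $$ (i,j) = ext1 m e A3 $$ (i,j)"
    proof (cases "i = 0")
      case True then show ?thesis using row0[OF j] i j unfolding ext1_def n_def by simp
    next
      case False
      then show ?thesis using col0 i j unfolding ext1_def A3_def n_def by (cases j, auto)
    qed
  qed (use A'c in \<open>auto simp: n_def\<close>)
  define V where "V = ext1 m 1 U3"
  define d where "d = (\<lambda>i. if i = 0 then Re e else d3 (i - 1))"
  have VU: "unitary n V" unfolding V_def n_def using ext1_unitary[OF U3(1)] .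
  have Vc: "V \<in> carrier_mat n n" using VU unitary_carrier by blast
  have "A' = ext1 m (1 * complex_of_real (Re e) * 1) (U3 * diagm m d3 * mat_adjoint U3)"
    using A'ext U3(2) by (simp add: ereal[symmetric])
  also have "\<dots> = V * diagm n d * mat_adjoint V"
    unfolding V_def d_def n_def
    using U3c by (simp add: ext1_mult ext1_adj ext1_diag[symmetric])
  finally have A'eq: "A' = V * diagm n d * mat_adjoint V" .
  have "A = (W * mat_adjoint W) * A * (W * mat_adjoint W)"
    using unitary_right[OF WU] A by simp
  also have "\<dots> = W * A' * mat_adjoint W"
    unfolding A'_def using W A by (simp add: assoc_mult_mat[of _ n n _ n _ n])
  also have "\<dots> = (W * V) * diagm n d * mat_adjoint (W * V)"
    unfolding A'eq using W Vc adj_mult[OF W Vc] by (simp add: assoc_mult_mat[of _ n n _ n _ n])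
  finally have "A = (W * V) * diagm n d * mat_adjoint (W * V)" .
  moreover have "unitary n (W * V)" using unitary_mult[OF WU VU] .
  ultimately show ?case unfolding n_def by blast
qed


lemma cprod_adj: fixes X :: "complex mat" assumes X: "X \<in> carrier_mat n m" and x: "x \<in> carrier_vec m" and y: "y \<in> carrier_vec n"
  shows "(X *\<^sub>v x) \<bullet>c y = x \<bullet>c (mat_adjoint X *\<^sub>v y)"
proof -
  have "(X *\<^sub>v x) \<bullet>c y = (\<Sum>i<n. (\<Sum>k<m. X $$ (i,k) * x $ k) * cnj (y $ i))"
    using X x y by (simp add: scalar_prod_def atLeast0LessThan)
  also have "\<dots> = (\<Sum>i<n. \<Sum>k<m. x $ k * (X $$ (i,k) * cnj (y $ i)))"
    by (simp add: sum_distrib_left sum_distrib_right algebra_simps)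
  also have "\<dots> = (\<Sum>k<m. \<Sum>i<n. x $ k * (X $$ (i,k) * cnj (y $ i)))"
    by (rule sum.swap)
  also have "\<dots> = x \<bullet>c (mat_adjoint X *\<^sub>v y)"
    using X x y by (simp add: scalar_prod_def atLeast0LessThan sum_distrib_left)
  finally show ?thesis .
qed

lemma diagm_mult: "diagm n a * diagm n b = diagm n (\<lambda>i. a i * b i)"
proof (rule eq_matI)
  fix i j assume "i < dim_row (diagm n (\<lambda>i. a i * b i))" "j < dim_col (diagm n (\<lambda>i. a i * b i))"
  then have i: "i < n" and j: "j < n" by (auto simp: diagm_def)
  have "(diagm n a * diagm n b) $$ (i,j) = (\<Sum>k<n. diagm n a $$ (i,k) * diagm n b $$ (k,j))"
    using mult_entry[OF diagm_carrier diagm_carrier i j] .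
  also have "\<dots> = (\<Sum>k<n. if k = i then diagm n a $$ (i,k) * diagm n b $$ (k,j) else 0)"
    by (rule sum.cong, use i j in \<open>auto simp: diagm_def\<close>)
  also have "\<dots> = diagm n (\<lambda>i. a i * b i) $$ (i,j)"
    using i j by (simp add: diagm_def)
  finally show "(diagm n a * diagm n b) $$ (i,j) = diagm n (\<lambda>i. a i * b i) $$ (i,j)" .
qed (auto simp: diagm_def)

lemma diagm_adj[simp]: "mat_adjoint (diagm n d) = diagm n d"
  by (rule eq_matI, auto simp: diagm_def)

lemma diagm_minus: "diagm n a - diagm n b = diagm n (\<lambda>i. a i - b i)"
  by (rule eq_matI, auto simp: diagm_def)

lemma udu_herm: assumes U: "U \<in> carrier_mat n n"
  shows "hermitian_mat n (U * diagm n d * mat_adjoint U)"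
  unfolding hermitian_mat_def
proof
  show "U * diagm n d * mat_adjoint U \<in> carrier_mat n n" using U by simp
  have "mat_adjoint (U * diagm n d * mat_adjoint U) = U * (diagm n d * mat_adjoint U)"
    using U by (simp add: adj_mult[of _ n n _ n])
  also have "\<dots> = U * diagm n d * mat_adjoint U" using U by (simp add: assoc_mult_mat[of _ n n _ n _ n])
  finally show "mat_adjoint (U * diagm n d * mat_adjoint U) = U * diagm n d * mat_adjoint U" .
qed

lemma qf_diag: assumes w: "w \<in> carrier_vec n"
  shows "Re (qf (diagm n d) w) = (\<Sum>i<n. d i * ((Re (w $ i))\<^sup>2 + (Im (w $ i))\<^sup>2))"
proof -
  have "qf (diagm n d) w = (\<Sum>i<n. \<Sum>j<n. diagm n d $$ (i,j) * w $ j * cnj (w $ i))"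
    using qf_sum[OF diagm_carrier w] .
  also have "\<dots> = (\<Sum>i<n. \<Sum>j<n. if j = i then complex_of_real (d i) * (w $ i * cnj (w $ i)) else 0)"
    by (rule sum.cong[OF refl], rule sum.cong[OF refl], auto simp: diagm_def)
  also have "\<dots> = (\<Sum>i<n. complex_of_real (d i * ((Re (w $ i))\<^sup>2 + (Im (w $ i))\<^sup>2)))"
    by (simp add: complex_mult_cnj)
  finally show ?thesis by (simp add: Re_sum)
qed

lemma qf_udu: assumes U: "U \<in> carrier_mat n n" and v: "v \<in> carrier_vec n"
  shows "qf (U * diagm n d * mat_adjoint U) v = qf (diagm n d) (mat_adjoint U *\<^sub>v v)"
proof -
  have "(U * diagm n d * mat_adjoint U) *\<^sub>v v = U *\<^sub>v (diagm n d *\<^sub>v (mat_adjoint U *\<^sub>v v))"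
    using U v by (simp add: assoc_mult_mat_vec[of _ n n _ n v] assoc_mult_mat[of _ n n _ n _ n])
  moreover have "diagm n d *\<^sub>v (mat_adjoint U *\<^sub>v v) \<in> carrier_vec n"
    using U v by (meson mult_mat_vec_carrier adj_carrier diagm_carrier)
  ultimately show ?thesis unfolding qf_def
    using cprod_adj[OF U _ v, of "diagm n d *\<^sub>v (mat_adjoint U *\<^sub>v v)"] by simp
qed

lemma udu_psd: assumes U: "U \<in> carrier_mat n n" and d: "\<And>i. d i \<ge> 0"
  shows "psd_mat n (U * diagm n d * mat_adjoint U)"
  unfolding psd_iff
proof (intro conjI ballI udu_herm U)
  fix v :: "complex vec" assume v: "v \<in> carrier_vec n"
  have w: "mat_adjoint U *\<^sub>v v \<in> carrier_vec n" using U v by (meson mult_mat_vec_carrier adj_carrier)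
  show "0 \<le> Re (qf (U * diagm n d * mat_adjoint U) v)"
    unfolding qf_udu[OF U v] qf_diag[OF w] using d by (intro sum_nonneg) simp
qed


lemma mult_diagm_entry: assumes U: "U \<in> carrier_mat n n" and k: "k < n" and i: "i < n"
  shows "(U * diagm n d) $$ (k,i) = U $$ (k,i) * complex_of_real (d i)"
proof -
  have "(U * diagm n d) $$ (k,i) = (\<Sum>j<n. U $$ (k,j) * diagm n d $$ (j,i))"
    using mult_entry[OF U diagm_carrier k i] .
  also have "\<dots> = (\<Sum>j<n. if j = i then U $$ (k,i) * complex_of_real (d i) else 0)"
    by (rule sum.cong, use i in \<open>auto simp: diagm_def\<close>)
  also have "\<dots> = U $$ (k,i) * complex_of_real (d i)" using i by simp
  finally show ?thesis .
qed

lemma col_eig: assumes U: "unitary n U" and A: "A = U * diagm n d * mat_adjoint U" and i: "i < n"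
  shows "A *\<^sub>v col U i = complex_of_real (d i) \<cdot>\<^sub>v col U i"
proof -
  have Uc: "U \<in> carrier_mat n n" using U unitary_carrier by blast
  have AU: "A * U = U * diagm n d"
  proof -
    have "A * U = U * diagm n d * (mat_adjoint U * U)" unfolding A using Uc
      by (simp add: assoc_mult_mat[of _ n n _ n _ n])
    then show ?thesis using unitary_left[OF U] Uc by simp
  qed
  show ?thesis
  proof (rule eq_vecI)
    fix k assume "k < dim_vec (complex_of_real (d i) \<cdot>\<^sub>v col U i)"
    then have k: "k < n" using Uc by simp
    have "(A *\<^sub>v col U i) $ k = (A * U) $$ (k,i)" using Uc k i A by simp
    also have "\<dots> = U $$ (k,i) * complex_of_real (d i)" unfolding AU by (rule mult_diagm_entry[OF Uc k i])
    also have "\<dots> = (complex_of_real (d i) \<cdot>\<^sub>v col U i) $ k" using Uc k i by simp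
    finally show "(A *\<^sub>v col U i) $ k = (complex_of_real (d i) \<cdot>\<^sub>v col U i) $ k" .
  qed (use Uc A in simp)
qed

lemma psd_herm: "psd_mat n P \<Longrightarrow> P \<in> carrier_mat n n \<and> mat_adjoint P = P"
  unfolding psd_mat_def hermitian_mat_def by auto

lemma sq_zero: assumes x: "x \<in> carrier_vec n" and r: "Re (x \<bullet>c x) \<le> 0"
  shows "x = 0\<^sub>v n"
proof -
  have "x \<bullet>c x \<ge> 0" by (rule conjugate_square_ge_0_vec)
  then have "Im (x \<bullet>c x) = 0" "Re (x \<bullet>c x) \<ge> 0" by (auto simp: less_eq_complex_def)
  with r have "x \<bullet>c x = 0" by (simp add: complex_eq_iff)
  then show ?thesis using x by simp
qed

lemma zero_mat_vec: "u \<in> carrier_vec n \<Longrightarrow> 0\<^sub>m m n *\<^sub>v u = (0\<^sub>v m :: complex vec)"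
  by (intro eq_vecI) (auto simp: scalar_prod_def)

lemma cprod_smult_left: assumes "x \<in> carrier_vec n" "y \<in> carrier_vec n"
  shows "(a \<cdot>\<^sub>v x) \<bullet>c y = a * (x \<bullet>c (y::complex vec))"
  using assms by (simp add: scalar_prod_def sum_distrib_left algebra_simps)

lemma cprod_uminus_left: assumes "x \<in> carrier_vec n" "y \<in> carrier_vec n"
  shows "(- x) \<bullet>c y = - (x \<bullet>c (y::complex vec))"
  using assms by (simp add: scalar_prod_def sum_negf)

lemma jordan_vec:
  assumes P: "psd_mat n P" and N: "psd_mat n N" and PN: "P * N = 0\<^sub>m n n" and NP: "N * P = 0\<^sub>m n n"
    and u: "u \<in> carrier_vec n" and Au: "(P - N) *\<^sub>v u = complex_of_real l \<cdot>\<^sub>v u"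
  shows "P *\<^sub>v u = complex_of_real (max l 0) \<cdot>\<^sub>v u \<and> N *\<^sub>v u = complex_of_real (max (-l) 0) \<cdot>\<^sub>v u"
proof -
  have Pc: "P \<in> carrier_mat n n" and Pa: "mat_adjoint P = P" using psd_herm[OF P] by auto
  have Nc: "N \<in> carrier_mat n n" and Na: "mat_adjoint N = N" using psd_herm[OF N] by auto
  define x where "x = P *\<^sub>v u"
  define y where "y = N *\<^sub>v u"
  have xc: "x \<in> carrier_vec n" and yc: "y \<in> carrier_vec n" unfolding x_def y_def using Pc Nc u by auto
  have xy: "x - y = complex_of_real l \<cdot>\<^sub>v u" unfolding x_def y_def using Au Pc Nc u
    by (simp add: minus_mult_distrib_mat_vec)
  have Py: "P *\<^sub>v y = 0\<^sub>v n" unfolding y_def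
    using assoc_mult_mat_vec[OF Pc Nc u, symmetric] PN zero_mat_vec[OF u] by simp
  have Nx: "N *\<^sub>v x = 0\<^sub>v n" unfolding x_def
    using assoc_mult_mat_vec[OF Nc Pc u, symmetric] NP zero_mat_vec[OF u] by simp
  have Px: "P *\<^sub>v x = complex_of_real l \<cdot>\<^sub>v x"
  proof -
    have "P *\<^sub>v (x - y) = P *\<^sub>v x" using mult_minus_distrib_mat_vec[OF Pc xc yc] Py xc Pc by simp
    moreover have "complex_of_real l \<cdot>\<^sub>v x = P *\<^sub>v (complex_of_real l \<cdot>\<^sub>v u)"
      unfolding x_def by (rule mult_mat_vec[OF Pc u, symmetric])
    moreover have "P *\<^sub>v (x - y) = P *\<^sub>v (complex_of_real l \<cdot>\<^sub>v u)" by (simp only: xy)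
    ultimately show ?thesis by simp
  qed
  have Ny: "N *\<^sub>v y = - (complex_of_real l \<cdot>\<^sub>v y)"
  proof -
    have "N *\<^sub>v (x - y) = - (N *\<^sub>v y)" using mult_minus_distrib_mat_vec[OF Nc xc yc] Nx yc Nc by simp
    moreover have "complex_of_real l \<cdot>\<^sub>v y = N *\<^sub>v (complex_of_real l \<cdot>\<^sub>v u)"
      unfolding y_def by (rule mult_mat_vec[OF Nc u, symmetric])
    moreover have "N *\<^sub>v (x - y) = N *\<^sub>v (complex_of_real l \<cdot>\<^sub>v u)" by (simp only: xy)
    ultimately have "- (N *\<^sub>v y) = complex_of_real l \<cdot>\<^sub>v y" by simp
    then have "- (- (N *\<^sub>v y)) = - (complex_of_real l \<cdot>\<^sub>v y)" by simp
    then show ?thesis by simp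
  qed
  have xx: "x \<bullet>c x = complex_of_real l * qf P u"
  proof -
    have "x \<bullet>c x = x \<bullet>c (mat_adjoint P *\<^sub>v u)" unfolding Pa x_def ..
    also have "\<dots> = (P *\<^sub>v x) \<bullet>c u" using cprod_adj[OF Pc xc u] by simp
    also have "\<dots> = complex_of_real l * (x \<bullet>c u)" unfolding Px using cprod_smult_left[OF xc u] .
    finally show ?thesis unfolding qf_def x_def .
  qed
  have yy: "y \<bullet>c y = - (complex_of_real l * qf N u)"
  proof -
    have "y \<bullet>c y = y \<bullet>c (mat_adjoint N *\<^sub>v u)" unfolding Na y_def ..
    also have "\<dots> = (N *\<^sub>v y) \<bullet>c u" using cprod_adj[OF Nc yc u] by simp
    also have "\<dots> = - (complex_of_real l * (y \<bullet>c u))" unfolding Ny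
      using cprod_uminus_left[of "complex_of_real l \<cdot>\<^sub>v y" n u] cprod_smult_left[OF yc u] yc u by simp
    finally show ?thesis unfolding qf_def y_def .
  qed
  have qP: "Re (qf P u) \<ge> 0" using P u unfolding psd_iff by blast
  have qN: "Re (qf N u) \<ge> 0" using N u unfolding psd_iff by blast
  have x0: "l \<le> 0 \<Longrightarrow> x = 0\<^sub>v n"
  proof (rule sq_zero[OF xc])
    assume "l \<le> 0"
    then show "Re (x \<bullet>c x) \<le> 0" unfolding xx using qP by (simp add: mult_nonpos_nonneg)
  qed
  have y0: "l \<ge> 0 \<Longrightarrow> y = 0\<^sub>v n"
  proof (rule sq_zero[OF yc])
    assume "l \<ge> 0"
    then show "Re (y \<bullet>c y) \<le> 0" unfolding yy using qN by simp
  qed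
  have xyk: "\<And>k. k < n \<Longrightarrow> x $ k - y $ k = complex_of_real l * u $ k"
  proof -
    fix k assume k: "k < n"
    have "(x - y) $ k = (complex_of_real l \<cdot>\<^sub>v u) $ k" using xy by simp
    then show "x $ k - y $ k = complex_of_real l * u $ k" using k xc yc u by simp
  qed
  have "x = complex_of_real (max l 0) \<cdot>\<^sub>v u \<and> y = complex_of_real (max (-l) 0) \<cdot>\<^sub>v u"
  proof (cases "l \<ge> 0")
    case True
    note y0 = y0[OF True]
    show ?thesis
    proof
      show "x = complex_of_real (max l 0) \<cdot>\<^sub>v u"
        by (rule eq_vecI, use True xyk y0 xc u in auto)
      show "y = complex_of_real (max (-l) 0) \<cdot>\<^sub>v u"
        by (rule eq_vecI, use True y0 yc u in auto)
    qed
  next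
    case False
    note x0 = x0[OF _] 
    have x0: "x = 0\<^sub>v n" using False x0 by simp
    show ?thesis
    proof
      show "x = complex_of_real (max l 0) \<cdot>\<^sub>v u"
        by (rule eq_vecI, use False x0 xc u in auto)
      show "y = complex_of_real (max (-l) 0) \<cdot>\<^sub>v u"
      proof (rule eq_vecI)
        fix k assume "k < dim_vec (complex_of_real (max (- l) 0) \<cdot>\<^sub>v u)"
        then have k: "k < n" using u by simp
        have "y $ k = - (complex_of_real l * u $ k)" using xyk[OF k] x0 k by (simp, metis minus_minus)
        then show "y $ k = (complex_of_real (max (- l) 0) \<cdot>\<^sub>v u) $ k" using False k u by simp
      qed (use yc u in simp)
    qed
  qed
  then show ?thesis unfolding x_def y_def .
qed


lemma determined_by_cols: assumes U: "unitary n U" and P: "P \<in> carrier_mat n n"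
  and h: "\<And>i. i < n \<Longrightarrow> P *\<^sub>v col U i = complex_of_real (c i) \<cdot>\<^sub>v col U i"
  shows "P = U * diagm n c * mat_adjoint U"
proof -
  have Uc: "U \<in> carrier_mat n n" using U unitary_carrier by blast
  have PU: "P * U = U * diagm n c"
  proof (rule eq_matI)
    fix k i assume "k < dim_row (U * diagm n c)" "i < dim_col (U * diagm n c)"
    then have k: "k < n" and i: "i < n" using Uc by auto
    have "(P * U) $$ (k,i) = (P *\<^sub>v col U i) $ k" using P Uc k i by simp
    also have "\<dots> = complex_of_real (c i) * U $$ (k,i)" unfolding h[OF i] using Uc k i by simp
    also have "\<dots> = (U * diagm n c) $$ (k,i)" using mult_diagm_entry[OF Uc k i] by simp
    finally show "(P * U) $$ (k,i) = (U * diagm n c) $$ (k,i)" .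
  qed (use P Uc in auto)
  have "P = P * (U * mat_adjoint U)" using unitary_right[OF U] P by simp
  also have "\<dots> = (P * U) * mat_adjoint U" using P Uc by (simp add: assoc_mult_mat[of _ n n _ n _ n])
  finally show ?thesis unfolding PU .
qed

lemma adj_zero[simp]: "mat_adjoint (0\<^sub>m n m :: complex mat) = 0\<^sub>m m n"
  by (rule eq_matI, auto)

lemma jordan_char: assumes U: "unitary n U" and A: "A = U * diagm n d * mat_adjoint U"
  shows "pos_part A = U * diagm n (\<lambda>i. max (d i) 0) * mat_adjoint U \<and>
         neg_part A = U * diagm n (\<lambda>i. max (- d i) 0) * mat_adjoint U"
proof -
  define dp where "dp = (\<lambda>i. max (d i) 0)"
  define dn where "dn = (\<lambda>i. max (- d i) 0)"
  define P0 where "P0 = U * diagm n dp * mat_adjoint U"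
  define N0 where "N0 = U * diagm n dn * mat_adjoint U"
  have Uc: "U \<in> carrier_mat n n" using U unitary_carrier by blast
  have Ac: "A \<in> carrier_mat n n" unfolding A using Uc by simp
  then have dA: "dim_row A = n" by simp
  have P0: "psd_mat n P0" unfolding P0_def by (rule udu_psd[OF Uc], simp add: dp_def)
  have N0: "psd_mat n N0" unfolding N0_def by (rule udu_psd[OF Uc], simp add: dn_def)
  have AP0N0: "A = P0 - N0"
  proof -
    have "P0 - N0 = (U * diagm n dp - U * diagm n dn) * mat_adjoint U"
      unfolding P0_def N0_def using Uc by (simp add: minus_mult_distrib_mat[of _ n n _ _ n])
    also have "U * diagm n dp - U * diagm n dn = U * (diagm n dp - diagm n dn)"
      using Uc by (simp add: mult_minus_distrib_mat[of _ n n _ n])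
    also have "diagm n dp - diagm n dn = diagm n d"
      unfolding diagm_minus dp_def dn_def by (rule arg_cong[where f = "diagm n"], auto)
    finally show ?thesis unfolding A by simp
  qed
  have P0N0: "P0 * N0 = 0\<^sub>m n n"
  proof -
    have "P0 * N0 = U * (diagm n dp * (mat_adjoint U * U) * diagm n dn) * mat_adjoint U"
      unfolding P0_def N0_def using Uc by (simp add: assoc_mult_mat[of _ n n _ n _ n])
    also have "diagm n dp * (mat_adjoint U * U) * diagm n dn = diagm n (\<lambda>i. dp i * dn i)"
      unfolding unitary_left[OF U] by (simp add: diagm_mult)
    also have "diagm n (\<lambda>i. dp i * dn i) = 0\<^sub>m n n"
      by (rule eq_matI, auto simp: diagm_def dp_def dn_def)
    finally show ?thesis using Uc by simp
  qed
  have uniq: "P = P0 \<and> N = N0" if P: "psd_mat n P" and N: "psd_mat n N" and APN: "A = P - N"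
    and PN: "P * N = 0\<^sub>m n n" for P N
  proof -
    have Pc: "P \<in> carrier_mat n n" and Pa: "mat_adjoint P = P" using psd_herm[OF P] by auto
    have Nc: "N \<in> carrier_mat n n" and Na: "mat_adjoint N = N" using psd_herm[OF N] by auto
    have NP: "N * P = 0\<^sub>m n n"
    proof -
      have "N * P = mat_adjoint (P * N)" using adj_mult[OF Pc Nc] Pa Na by simp
      then show ?thesis using PN by simp
    qed
    have ev: "P *\<^sub>v col U i = complex_of_real (dp i) \<cdot>\<^sub>v col U i \<and>
      N *\<^sub>v col U i = complex_of_real (dn i) \<cdot>\<^sub>v col U i" if i: "i < n" for i
      unfolding dp_def dn_def
    proof (rule jordan_vec[OF P N PN NP])
      show "col U i \<in> carrier_vec n" using Uc i by simp
      show "(P - N) *\<^sub>v col U i = complex_of_real (d i) \<cdot>\<^sub>v col U i"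
        unfolding APN[symmetric] using col_eig[OF U A i] .
    qed
    show ?thesis unfolding P0_def N0_def
      using determined_by_cols[OF U Pc] determined_by_cols[OF U Nc] ev by blast
  qed
  have J: "jordan_parts A = (P0, N0)" unfolding jordan_parts_def dA
  proof (rule the_equality)
    show "case (P0, N0) of (P, N) \<Rightarrow> psd_mat n P \<and> psd_mat n N \<and> A = P - N \<and> P * N = 0\<^sub>m n n"
      using P0 N0 AP0N0 P0N0 by simp
    fix x assume "case x of (P, N) \<Rightarrow> psd_mat n P \<and> psd_mat n N \<and> A = P - N \<and> P * N = 0\<^sub>m n n"
    then show "x = (P0, N0)" using uniq by (cases x) auto
  qed
  show ?thesis unfolding pos_part_def neg_part_def J P0_def N0_def dp_def dn_def by simp
qed


lemma order_lin: "order z [:-x, 1:] = (if z = x then 1 else (0::nat))" for x z :: complex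
proof (cases "z = x")
  case True
  then show ?thesis using order_power_n_n[of x 1] by simp
next
  case False
  have "order z [:-x, 1:] = 0" by (rule order_0I) (use False in simp)
  then show ?thesis using False by simp
qed

lemma prod_lin_nz: "(\<Prod>a\<leftarrow>xs. [:-a, 1:]) \<noteq> (0 :: complex poly)"
proof (induct xs)
  case (Cons a xs)
  then show ?case by (simp only: list.map prod_list.Cons mult_eq_0_iff) simp
qed simp

lemma poly_prod_lin: "poly (\<Prod>a\<leftarrow>xs. [:-a, 1:]) z = 0 \<longleftrightarrow> (z::complex) \<in> set xs"
proof (induct xs)
  case (Cons a xs)
  then show ?case by (simp only: list.map prod_list.Cons poly_mult mult_eq_0_iff) auto
qed simp

lemma sum_order: assumes "finite S" "set xs \<subseteq> S"
  shows "(\<Sum>z\<in>S. real (order z (\<Prod>a\<leftarrow>xs. [:-a, 1:])) * f z) = sum_list (map f (xs :: complex list))"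
  using assms(2)
proof (induct xs)
  case Nil
  have "\<And>z. order z (1 :: complex poly) = 0" by (intro order_0I) simp
  then show ?case by simp
next
  case (Cons x xs)
  have nz: "[:-x, 1:] * (\<Prod>a\<leftarrow>xs. [:-a, 1:]) \<noteq> (0 :: complex poly)"
    using prod_lin_nz[of "x # xs"] by simp
  have o: "\<And>z. order z (\<Prod>a\<leftarrow>x # xs. [:-a, 1:]) = (if z = x then 1 else 0) + order z (\<Prod>a\<leftarrow>xs. [:-a, 1:])"
    by (simp only: list.map prod_list.Cons order_mult[OF nz] order_lin)
  have "(\<Sum>z\<in>S. real (order z (\<Prod>a\<leftarrow>x # xs. [:-a, 1:])) * f z)
      = (\<Sum>z\<in>S. (if z = x then f z else 0) + real (order z (\<Prod>a\<leftarrow>xs. [:-a, 1:])) * f z)"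
    by (rule sum.cong[OF refl], simp only: o, simp add: distrib_right)
  also have "\<dots> = f x + sum_list (map f xs)"
    using Cons assms(1) by (simp add: sum.distrib)
  finally show ?case by simp
qed

lemma char_poly_udu: assumes U: "unitary n U"
  shows "char_poly (U * diagm n e * mat_adjoint U) = (\<Prod>a\<leftarrow>map (\<lambda>i. complex_of_real (e i)) [0..<n]. [:-a, 1:])"
proof -
  have Uc: "U \<in> carrier_mat n n" using U unitary_carrier by blast
  have "similar_mat (U * diagm n e * mat_adjoint U) (diagm n e)"
    unfolding similar_mat_def similar_mat_wit_def Let_def
    using Uc unitary_left[OF U] unitary_right[OF U] by (intro exI[of _ U] exI[of _ "mat_adjoint U"]) simp
  then have "char_poly (U * diagm n e * mat_adjoint U) = char_poly (diagm n e)" by (rule char_poly_similar)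
  also have "\<dots> = (\<Prod>a\<leftarrow>diag_mat (diagm n e). [:-a, 1:])"
    by (rule char_poly_upper_triangular[OF diagm_carrier], auto simp: upper_triangular_def diagm_def)
  also have "diag_mat (diagm n e) = map (\<lambda>i. complex_of_real (e i)) [0..<n]"
    unfolding diag_mat_def by (simp add: diagm_def)
  finally show ?thesis .
qed

lemma trace_norm_udu: assumes U: "unitary n U" and c: "\<And>i. c i \<ge> 0"
  shows "trace_norm (U * diagm n c * mat_adjoint U) = (\<Sum>i<n. c i)"
proof -
  have Uc: "U \<in> carrier_mat n n" using U unitary_carrier by blast
  define X where "X = U * diagm n c * mat_adjoint U"
  have Xa: "mat_adjoint X = X" using udu_herm[OF Uc] unfolding X_def hermitian_mat_def by simp
  have "X * X = U * (diagm n c * (mat_adjoint U * U) * diagm n c) * mat_adjoint U"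
    unfolding X_def using Uc by (simp add: assoc_mult_mat[of _ n n _ n _ n])
  also have "\<dots> = U * diagm n (\<lambda>i. c i * c i) * mat_adjoint U"
    unfolding unitary_left[OF U] by (simp add: diagm_mult)
  finally have XX: "mat_adjoint X * X = U * diagm n (\<lambda>i. c i * c i) * mat_adjoint U" unfolding Xa .
  define xs where "xs = map (\<lambda>i. complex_of_real (c i * c i)) [0..<n]"
  define p where "p = (\<Prod>a\<leftarrow>xs. [:-a, 1:])"
  have cp: "char_poly (mat_adjoint X * X) = p" unfolding XX p_def xs_def by (rule char_poly_udu[OF U])
  have roots: "{z. poly p z = 0} = set xs" unfolding p_def
    using poly_prod_lin by blast
  have "trace_norm X = (\<Sum>z\<in>{z. poly p z = 0}. real (order z p) * sqrt (Re z))"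
    unfolding trace_norm_def cp Let_def ..
  also have "\<dots> = sum_list (map (\<lambda>z. sqrt (Re z)) xs)"
    unfolding roots unfolding p_def by (rule sum_order) auto
  also have "\<dots> = (\<Sum>i<n. c i)" unfolding xs_def
    by (simp add: sum_list_distinct_conv_sum_set atLeast0LessThan c real_sqrt_mult)
  finally show ?thesis unfolding X_def .
qed


lemma mtrace_sum: "A \<in> carrier_mat n n \<Longrightarrow> mtrace A = (\<Sum>i<n. A $$ (i,i))"
  unfolding mtrace_def by simp

lemma mtrace_comm: assumes A: "A \<in> carrier_mat n m" and B: "B \<in> carrier_mat m n"
  shows "mtrace (A * B) = mtrace (B * A)"
proof -
  have "mtrace (A * B) = (\<Sum>i<n. \<Sum>k<m. A $$ (i,k) * B $$ (k,i))"
    unfolding mtrace_def using A B by (simp add: scalar_prod_def atLeast0LessThan)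
  also have "\<dots> = (\<Sum>k<m. \<Sum>i<n. B $$ (k,i) * A $$ (i,k))"
    by (subst sum.swap) (simp add: mult.commute)
  also have "\<dots> = mtrace (B * A)"
    unfolding mtrace_def using A B by (simp add: scalar_prod_def atLeast0LessThan)
  finally show ?thesis .
qed

lemma mtrace_udu: assumes U: "unitary n U"
  shows "mtrace (U * diagm n e * mat_adjoint U) = complex_of_real (\<Sum>i<n. e i)"
proof -
  have Uc: "U \<in> carrier_mat n n" using U unitary_carrier by blast
  have "mtrace (U * diagm n e * mat_adjoint U) = mtrace (U * (diagm n e * mat_adjoint U))"
    using Uc by (simp add: assoc_mult_mat[of _ n n _ n _ n])
  also have "\<dots> = mtrace ((diagm n e * mat_adjoint U) * U)"
    by (rule mtrace_comm[OF Uc], use Uc in simp)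
  also have "\<dots> = mtrace (diagm n e * (mat_adjoint U * U))"
    using Uc by (simp add: assoc_mult_mat[of _ n n _ n _ n])
  also have "\<dots> = mtrace (diagm n e)" unfolding unitary_left[OF U] by simp
  also have "\<dots> = complex_of_real (\<Sum>i<n. e i)" unfolding mtrace_def by (simp add: diagm_def)
  finally show ?thesis .
qed

lemma mtrace_conj: assumes U: "unitary n U" and X: "X \<in> carrier_mat n n"
  shows "(\<Sum>i<n. (mat_adjoint U * X * U) $$ (i,i)) = mtrace X"
proof -
  have Uc: "U \<in> carrier_mat n n" using U unitary_carrier by blast
  have "(\<Sum>i<n. (mat_adjoint U * X * U) $$ (i,i)) = mtrace (mat_adjoint U * (X * U))"
    using Uc X by (simp add: mtrace_sum[of _ n] assoc_mult_mat[of _ n n _ n _ n])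
  also have "\<dots> = mtrace ((X * U) * mat_adjoint U)"
    by (rule mtrace_comm[of _ n n], use Uc X in simp_all)
  also have "\<dots> = mtrace (X * (U * mat_adjoint U))"
    using Uc X by (simp add: assoc_mult_mat[of _ n n _ n _ n])
  also have "\<dots> = mtrace X" unfolding unitary_right[OF U] using X by simp
  finally show ?thesis .
qed

lemma qf_entry: assumes U: "U \<in> carrier_mat n n" and X: "X \<in> carrier_mat n n" and i: "i < n"
  shows "(mat_adjoint U * X * U) $$ (i,i) = qf X (col U i)"
proof -
  have "(mat_adjoint U * X * U) $$ (i,i) = (mat_adjoint U * (X * U)) $$ (i,i)"
    using U X by (simp add: assoc_mult_mat[of _ n n _ n _ n])
  also have "\<dots> = (\<Sum>k<n. mat_adjoint U $$ (i,k) * (X * U) $$ (k,i))"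
    by (rule mult_entry[OF adj_carrier[OF U] _ i i], use U X in simp)
  also have "\<dots> = (\<Sum>k<n. (X *\<^sub>v col U i) $ k * cnj (col U i $ k))"
    using U X i by (intro sum.cong refl) (simp add: mult.commute)
  also have "\<dots> = qf X (col U i)" unfolding qf_def using U X i
    by (simp add: scalar_prod_def atLeast0LessThan)
  finally show ?thesis .
qed

lemma cprod_swap: assumes "v \<in> carrier_vec n" "w \<in> carrier_vec n"
  shows "v \<bullet>c w = cnj (w \<bullet>c (v::complex vec))"
  using assms by (simp add: scalar_prod_def cnj_sum mult.commute)

lemma qf_herm_real: assumes X: "hermitian_mat n X" and v: "v \<in> carrier_vec n"
  shows "Im (qf X v) = 0"
proof -
  have Xc: "X \<in> carrier_mat n n" and Xa: "mat_adjoint X = X" using X unfolding hermitian_mat_def by auto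
  have Xv: "X *\<^sub>v v \<in> carrier_vec n" using Xc v by simp
  have "qf X v = v \<bullet>c (X *\<^sub>v v)" unfolding qf_def using cprod_adj[OF Xc v v] Xa by simp
  also have "\<dots> = cnj (qf X v)" unfolding qf_def by (rule cprod_swap[OF v Xv])
  finally have "qf X v = cnj (qf X v)" .
  then have "Im (qf X v) = Im (cnj (qf X v))" by simp
  then show ?thesis by simp
qed

lemma qf_lin: assumes X: "X \<in> carrier_mat n n" and Y: "Y \<in> carrier_mat n n" and v: "v \<in> carrier_vec n"
  shows "qf (complex_of_real a \<cdot>\<^sub>m X + complex_of_real b \<cdot>\<^sub>m Y) v = complex_of_real a * qf X v + complex_of_real b * qf Y v"
  using X Y v
  by (simp add: qf_sum[of _ n] sum.distrib sum_distrib_left algebra_simps)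

lemma udu_entry: assumes U: "U \<in> carrier_mat n n" and i: "i < n" and j: "j < n"
  shows "(U * diagm n e * mat_adjoint U) $$ (i,j) = (\<Sum>k<n. U $$ (i,k) * complex_of_real (e k) * cnj (U $$ (j,k)))"
proof -
  have "(U * diagm n e * mat_adjoint U) $$ (i,j) = (\<Sum>k<n. (U * diagm n e) $$ (i,k) * mat_adjoint U $$ (k,j))"
    by (rule mult_entry[OF _ adj_carrier[OF U] i j], use U in simp)
  also have "\<dots> = (\<Sum>k<n. U $$ (i,k) * complex_of_real (e k) * cnj (U $$ (j,k)))"
  proof (intro sum.cong refl)
    fix k assume "k \<in> {..<n}"
    then have k: "k < n" by simp
    have "(U * diagm n e) $$ (i,k) = U $$ (i,k) * complex_of_real (e k)" by (rule mult_diagm_entry[OF U i k])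
    moreover have "mat_adjoint U $$ (k,j) = cnj (U $$ (j,k))" using U j k by simp
    ultimately show "(U * diagm n e) $$ (i,k) * mat_adjoint U $$ (k,j) = U $$ (i,k) * complex_of_real (e k) * cnj (U $$ (j,k))"
      by simp
  qed
  finally show ?thesis .
qed

lemma udu_lin: assumes U: "U \<in> carrier_mat n n"
  shows "U * diagm n (\<lambda>i. a * e1 i + b * e2 i) * mat_adjoint U =
    complex_of_real a \<cdot>\<^sub>m (U * diagm n e1 * mat_adjoint U) + complex_of_real b \<cdot>\<^sub>m (U * diagm n e2 * mat_adjoint U)"
proof (rule eq_matI)
  fix i j assume "i < dim_row (complex_of_real a \<cdot>\<^sub>m (U * diagm n e1 * mat_adjoint U) + complex_of_real b \<cdot>\<^sub>m (U * diagm n e2 * mat_adjoint U))"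
    "j < dim_col (complex_of_real a \<cdot>\<^sub>m (U * diagm n e1 * mat_adjoint U) + complex_of_real b \<cdot>\<^sub>m (U * diagm n e2 * mat_adjoint U))"
  then have i: "i < n" and j: "j < n" using U by auto
  have d: "dim_row (U * diagm n e1 * mat_adjoint U) = n" "dim_col (U * diagm n e1 * mat_adjoint U) = n"
    "dim_row (U * diagm n e2 * mat_adjoint U) = n" "dim_col (U * diagm n e2 * mat_adjoint U) = n"
    "dim_row (complex_of_real b \<cdot>\<^sub>m (U * diagm n e2 * mat_adjoint U)) = n"
    "dim_col (complex_of_real b \<cdot>\<^sub>m (U * diagm n e2 * mat_adjoint U)) = n"
    using U by auto
  have "(complex_of_real a \<cdot>\<^sub>m (U * diagm n e1 * mat_adjoint U) + complex_of_real b \<cdot>\<^sub>m (U * diagm n e2 * mat_adjoint U)) $$ (i,j)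
    = complex_of_real a * (U * diagm n e1 * mat_adjoint U) $$ (i,j) + complex_of_real b * (U * diagm n e2 * mat_adjoint U) $$ (i,j)"
    using i j by (simp only: index_add_mat(1) index_smult_mat(1) d)
  also have "\<dots> = (\<Sum>k<n. U $$ (i,k) * complex_of_real (a * e1 k + b * e2 k) * cnj (U $$ (j,k)))"
    unfolding udu_entry[OF U i j] by (simp add: sum.distrib sum_distrib_left algebra_simps)
  also have "\<dots> = (U * diagm n (\<lambda>i. a * e1 i + b * e2 i) * mat_adjoint U) $$ (i,j)"
    unfolding udu_entry[OF U i j] ..
  finally show "(U * diagm n (\<lambda>i. a * e1 i + b * e2 i) * mat_adjoint U) $$ (i,j) =
    (complex_of_real a \<cdot>\<^sub>m (U * diagm n e1 * mat_adjoint U) + complex_of_real b \<cdot>\<^sub>m (U * diagm n e2 * mat_adjoint U)) $$ (i,j)" by simp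
qed (use U in auto)

lemma diagm_lin: "diagm n (\<lambda>i. a * e1 i + b * e2 i) =
    complex_of_real a \<cdot>\<^sub>m diagm n e1 + complex_of_real b \<cdot>\<^sub>m diagm n e2"
  by (rule eq_matI, auto simp: diagm_def)

lemma diagm_cong: "(\<And>i. i < n \<Longrightarrow> e1 i = e2 i) \<Longrightarrow> diagm n e1 = diagm n e2"
  by (rule eq_matI, auto simp: diagm_def)

lemma diagm_psd: "(\<And>i. e i \<ge> 0) \<Longrightarrow> psd_mat n (diagm n e)"
  using udu_psd[of "1\<^sub>m n" n e] by simp

lemma diagm_herm: "hermitian_mat n (diagm n e)"
  unfolding hermitian_mat_def by simp


lemma conj_unit: "conjugate (unit_vec n j) = (unit_vec n j :: complex vec)"
  by (rule eq_vecI, auto simp: unit_vec_def)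

lemma qf_unit: assumes Y: "Y \<in> carrier_mat n n" and j: "j < n"
  shows "qf Y (unit_vec n j) = Y $$ (j,j)"
  unfolding qf_def conj_unit using Y j by simp

lemma mtrace_diagm: "mtrace (diagm n e) = complex_of_real (\<Sum>i<n. e i)"
  unfolding mtrace_def by (simp add: diagm_def)

lemma S_lin: assumes U: "U \<in> carrier_mat n n" and S: "S \<subseteq> {..<n}"
  and X: "X \<in> carrier_mat n n" and Y: "Y \<in> carrier_mat n n"
  shows "(\<Sum>i\<in>S. (mat_adjoint U * (complex_of_real a \<cdot>\<^sub>m X + complex_of_real b \<cdot>\<^sub>m Y) * U) $$ (i,i))
    = complex_of_real a * (\<Sum>i\<in>S. (mat_adjoint U * X * U) $$ (i,i)) + complex_of_real b * (\<Sum>i\<in>S. (mat_adjoint U * Y * U) $$ (i,i))"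
proof -
  have ab: "complex_of_real a \<cdot>\<^sub>m X + complex_of_real b \<cdot>\<^sub>m Y \<in> carrier_mat n n" using X Y by simp
  have "(\<Sum>i\<in>S. (mat_adjoint U * (complex_of_real a \<cdot>\<^sub>m X + complex_of_real b \<cdot>\<^sub>m Y) * U) $$ (i,i))
     = (\<Sum>i\<in>S. complex_of_real a * (mat_adjoint U * X * U) $$ (i,i) + complex_of_real b * (mat_adjoint U * Y * U) $$ (i,i))"
  proof (rule sum.cong[OF refl])
    fix i assume "i \<in> S"
    then have i: "i < n" using S by auto
    show "(mat_adjoint U * (complex_of_real a \<cdot>\<^sub>m X + complex_of_real b \<cdot>\<^sub>m Y) * U) $$ (i,i)
      = complex_of_real a * (mat_adjoint U * X * U) $$ (i,i) + complex_of_real b * (mat_adjoint U * Y * U) $$ (i,i)"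
      unfolding qf_entry[OF U ab i] qf_entry[OF U X i] qf_entry[OF U Y i]
      using qf_lin[OF X Y, of "col U i" a b] U i by simp
  qed
  then show ?thesis by (simp add: sum.distrib sum_distrib_left)
qed

lemma S_psd: assumes U: "U \<in> carrier_mat n n" and S: "S \<subseteq> {..<n}" and X: "psd_mat n X"
  shows "Re (\<Sum>i\<in>S. (mat_adjoint U * X * U) $$ (i,i)) \<ge> 0"
proof -
  have Xc: "X \<in> carrier_mat n n" using psd_herm[OF X] by simp
  have "Re (\<Sum>i\<in>S. (mat_adjoint U * X * U) $$ (i,i)) = (\<Sum>i\<in>S. Re (qf X (col U i)))"
    unfolding Re_sum using S qf_entry[OF U Xc] by (intro sum.cong refl) auto
  also have "\<dots> \<ge> 0" using X S U unfolding psd_iff by (intro sum_nonneg) auto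
  finally show ?thesis by simp
qed

lemma S_real: assumes U: "U \<in> carrier_mat n n" and S: "S \<subseteq> {..<n}" and X: "hermitian_mat n X"
  shows "Im (\<Sum>i\<in>S. (mat_adjoint U * X * U) $$ (i,i)) = 0"
proof -
  have Xc: "X \<in> carrier_mat n n" using X unfolding hermitian_mat_def by simp
  have "Im (\<Sum>i\<in>S. (mat_adjoint U * X * U) $$ (i,i)) = (\<Sum>i\<in>S. Im (qf X (col U i)))"
    unfolding Im_sum using S qf_entry[OF U Xc] by (intro sum.cong refl) auto
  also have "\<dots> = 0" using X S U qf_herm_real[OF X] by (intro sum.neutral) auto
  finally show ?thesis .
qed

lemma phi_part: assumes mu: "ptp_monotone \<mu>" and n: "0 < n" and U: "unitary n U"
  and A: "A = U * diagm n d * mat_adjoint U"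
  shows "\<mu> (diagm 2 (\<lambda>j. if j = 0 then (\<Sum>i<n. max (d i) 0) else - (\<Sum>i<n. max (- d i) 0))) \<le> \<mu> A"
proof -
  have Uc: "U \<in> carrier_mat n n" using U unitary_carrier by blast
  define I where "I = {i \<in> {..<n}. 0 < d i}"
  define J where "J = {i \<in> {..<n}. \<not> 0 < d i}"
  have I: "I \<subseteq> {..<n}" and J: "J \<subseteq> {..<n}" unfolding I_def J_def by auto
  have IJ: "I \<union> J = {..<n}" "I \<inter> J = {}" "finite I" "finite J" unfolding I_def J_def by auto
  define F where "F = (\<lambda>X. \<Sum>i\<in>I. (mat_adjoint U * X * U) $$ (i,i))"
  define G where "G = (\<lambda>X. \<Sum>i\<in>J. (mat_adjoint U * X * U) $$ (i,i))"
  define \<Phi> where "\<Phi> = (\<lambda>X. diagm 2 (\<lambda>j. if j = 0 then Re (F X) else Re (G X)))"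
  have ptp: "ptp_map n 2 \<Phi>" unfolding ptp_map_def
  proof (intro conjI allI impI)
    fix X show "hermitian_mat 2 (\<Phi> X)" unfolding \<Phi>_def by (rule diagm_herm)
  next
    fix X Y :: "complex mat" and a b :: real
    assume X: "hermitian_mat n X" and Y: "hermitian_mat n Y"
    have Xc: "X \<in> carrier_mat n n" and Yc: "Y \<in> carrier_mat n n" using X Y unfolding hermitian_mat_def by auto
    have "\<Phi> (complex_of_real a \<cdot>\<^sub>m X + complex_of_real b \<cdot>\<^sub>m Y) =
      diagm 2 (\<lambda>j. a * (if j = 0 then Re (F X) else Re (G X)) + b * (if j = 0 then Re (F Y) else Re (G Y)))"
      unfolding \<Phi>_def F_def G_def S_lin[OF Uc I Xc Yc] S_lin[OF Uc J Xc Yc]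
      by (rule arg_cong[where f = "diagm 2"], auto)
    also have "\<dots> = complex_of_real a \<cdot>\<^sub>m \<Phi> X + complex_of_real b \<cdot>\<^sub>m \<Phi> Y"
      unfolding \<Phi>_def by (rule diagm_lin)
    finally show "\<Phi> (complex_of_real a \<cdot>\<^sub>m X + complex_of_real b \<cdot>\<^sub>m Y) = complex_of_real a \<cdot>\<^sub>m \<Phi> X + complex_of_real b \<cdot>\<^sub>m \<Phi> Y" .
  next
    fix X assume X: "psd_mat n X"
    show "psd_mat 2 (\<Phi> X)" unfolding \<Phi>_def F_def G_def
      by (rule diagm_psd, use S_psd[OF Uc I X] S_psd[OF Uc J X] in auto)
  next
    fix X assume X: "hermitian_mat n X"
    have Xc: "X \<in> carrier_mat n n" using X unfolding hermitian_mat_def by auto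
    have FG: "F X + G X = mtrace X"
      unfolding F_def G_def sum.union_disjoint[OF IJ(3,4,2), symmetric] IJ(1)
      by (rule mtrace_conj[OF U Xc])
    have "F X = complex_of_real (Re (F X))" using S_real[OF Uc I X] unfolding F_def by (simp add: complex_eq_iff)
    moreover have "G X = complex_of_real (Re (G X))" using S_real[OF Uc J X] unfolding G_def by (simp add: complex_eq_iff)
    ultimately have "mtrace X = complex_of_real (Re (F X) + Re (G X))" using FG by (metis of_real_add)
    moreover have "mtrace (\<Phi> X) = complex_of_real (Re (F X) + Re (G X))"
      unfolding \<Phi>_def mtrace_diagm by (simp add: numeral_2_eq_2 lessThan_Suc)
    ultimately show "mtrace (\<Phi> X) = mtrace X" by simp
  qed
  have Ah: "hermitian_mat n A" unfolding A by (rule udu_herm[OF Uc])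
  have UAU: "mat_adjoint U * A * U = diagm n d"
  proof -
    have "mat_adjoint U * A * U = (mat_adjoint U * U) * diagm n d * (mat_adjoint U * U)"
      unfolding A using Uc by (simp add: assoc_mult_mat[of _ n n _ n _ n])
    then show ?thesis unfolding unitary_left[OF U] by simp
  qed
  have FA: "Re (F A) = (\<Sum>i<n. max (d i) 0)"
  proof -
    have "Re (F A) = (\<Sum>i\<in>I. d i)" unfolding F_def UAU Re_sum using I
      by (intro sum.cong refl) (auto simp: diagm_def)
    also have "\<dots> = (\<Sum>i<n. if 0 < d i then d i else 0)" unfolding I_def by (rule sum.inter_filter, simp)
    also have "\<dots> = (\<Sum>i<n. max (d i) 0)" by (intro sum.cong refl) auto
    finally show ?thesis .
  qed
  have GA: "Re (G A) = - (\<Sum>i<n. max (- d i) 0)"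
  proof -
    have "Re (G A) = (\<Sum>i\<in>J. d i)" unfolding G_def UAU Re_sum using J
      by (intro sum.cong refl) (auto simp: diagm_def)
    also have "\<dots> = (\<Sum>i<n. if \<not> 0 < d i then d i else 0)" unfolding J_def by (rule sum.inter_filter, simp)
    also have "\<dots> = (\<Sum>i<n. - max (- d i) 0)" by (intro sum.cong refl) auto
    finally show ?thesis by (simp add: sum_negf)
  qed
  have "\<Phi> A = diagm 2 (\<lambda>j. if j = 0 then (\<Sum>i<n. max (d i) 0) else - (\<Sum>i<n. max (- d i) 0))"
    unfolding \<Phi>_def FA GA ..
  then show ?thesis using mu n ptp Ah unfolding ptp_monotone_def by (metis zero_less_numeral)
qed


lemma weight_props: fixes n :: nat and c :: "nat \<Rightarrow> real" assumes n: "0 < n" and c: "\<And>i. c i \<ge> (0::real)"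
  defines "a \<equiv> \<Sum>i<n. c i"
  defines "w \<equiv> (if a > 0 then (\<lambda>i. c i / a) else (\<lambda>i. if i = 0 then 1 else 0))"
  shows "\<And>i. w i \<ge> 0" "(\<Sum>i<n. w i) = 1" "\<And>i. i < n \<Longrightarrow> a * w i = c i"
proof -
  show "\<And>i. w i \<ge> 0" unfolding w_def using c by auto
  show "(\<Sum>i<n. w i) = 1"
  proof (cases "a > 0")
    case True
    then have "(\<Sum>i<n. w i) = (\<Sum>i<n. c i) / a" unfolding w_def by (simp add: sum_divide_distrib)
    then show ?thesis using True unfolding a_def by simp
  next
    case False
    then show ?thesis unfolding w_def using n by simp
  qed
  fix i assume i: "i < n"
  show "a * w i = c i"
  proof (cases "a > 0")
    case True
    then show ?thesis unfolding w_def by simp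
  next
    case False
    have "a \<ge> 0" unfolding a_def using c by (simp add: sum_nonneg)
    with False have a0: "a = 0" by simp
    then have "\<forall>j\<in>{..<n}. c j = 0" unfolding a_def using sum_nonneg_eq_0_iff[of "{..<n}" c] c by simp
    then show ?thesis using i a0 by simp
  qed
qed

lemma psi_part: assumes mu: "ptp_monotone \<mu>" and n: "0 < n" and U: "unitary n U"
  and A: "A = U * diagm n d * mat_adjoint U"
  shows "\<mu> A \<le> \<mu> (diagm 2 (\<lambda>j. if j = 0 then (\<Sum>i<n. max (d i) 0) else - (\<Sum>i<n. max (- d i) 0)))"
proof -
  have Uc: "U \<in> carrier_mat n n" using U unitary_carrier by blast
  define a where "a = (\<Sum>i<n. max (d i) 0)"
  define b where "b = (\<Sum>i<n. max (- d i) 0)"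
  define wp where "wp = (if a > 0 then (\<lambda>i. max (d i) 0 / a) else (\<lambda>i. if i = 0 then 1 else 0))"
  define wn where "wn = (if b > 0 then (\<lambda>i. max (- d i) 0 / b) else (\<lambda>i. if i = 0 then 1 else 0))"
  note wp = weight_props[of n "\<lambda>i. max (d i) 0", OF n max.cobounded2, folded a_def wp_def]
  note wn = weight_props[of n "\<lambda>i. max (- d i) 0", OF n max.cobounded2, folded b_def wn_def]
  have wp0: "\<And>i. wp i \<ge> 0" using wp(1) unfolding wp_def by blast
  have wn0: "\<And>i. wn i \<ge> 0" using wn(1) unfolding wn_def by blast
  have wp1: "(\<Sum>i<n. wp i) = 1" using wp(2) unfolding wp_def by blast
  have wn1: "(\<Sum>i<n. wn i) = 1" using wn(2) unfolding wn_def by blast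
  define \<Psi> where "\<Psi> = (\<lambda>Y::complex mat. U * diagm n (\<lambda>i. Re (Y $$ (0,0)) * wp i + Re (Y $$ (1,1)) * wn i) * mat_adjoint U)"
  have ptp: "ptp_map 2 n \<Psi>" unfolding ptp_map_def
  proof (intro conjI allI impI)
    fix X show "hermitian_mat n (\<Psi> X)" unfolding \<Psi>_def by (rule udu_herm[OF Uc])
  next
    fix X Y :: "complex mat" and a b :: real
    assume X: "hermitian_mat 2 X" and Y: "hermitian_mat 2 Y"
    have Xc: "X \<in> carrier_mat 2 2" and Yc: "Y \<in> carrier_mat 2 2" using X Y unfolding hermitian_mat_def by auto
    have e: "(complex_of_real a \<cdot>\<^sub>m X + complex_of_real b \<cdot>\<^sub>m Y) $$ (0,0) = complex_of_real a * X $$ (0,0) + complex_of_real b * Y $$ (0,0)"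
      "(complex_of_real a \<cdot>\<^sub>m X + complex_of_real b \<cdot>\<^sub>m Y) $$ (1,1) = complex_of_real a * X $$ (1,1) + complex_of_real b * Y $$ (1,1)"
      using Xc Yc by auto
    have "\<Psi> (complex_of_real a \<cdot>\<^sub>m X + complex_of_real b \<cdot>\<^sub>m Y) = U * diagm n (\<lambda>i. a * (Re (X $$ (0,0)) * wp i + Re (X $$ (1,1)) * wn i)
      + b * (Re (Y $$ (0,0)) * wp i + Re (Y $$ (1,1)) * wn i)) * mat_adjoint U"
      unfolding \<Psi>_def e by (simp add: algebra_simps)
    also have "\<dots> = complex_of_real a \<cdot>\<^sub>m \<Psi> X + complex_of_real b \<cdot>\<^sub>m \<Psi> Y"
      unfolding \<Psi>_def by (rule udu_lin[OF Uc])
    finally show "\<Psi> (complex_of_real a \<cdot>\<^sub>m X + complex_of_real b \<cdot>\<^sub>m Y) = complex_of_real a \<cdot>\<^sub>m \<Psi> X + complex_of_real b \<cdot>\<^sub>m \<Psi> Y" .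
  next
    fix Y assume Y: "psd_mat 2 Y"
    have Yc: "Y \<in> carrier_mat 2 2" using psd_herm[OF Y] by simp
    have "Re (qf Y (unit_vec 2 0)) \<ge> 0" "Re (qf Y (unit_vec 2 1)) \<ge> 0"
      using Y unfolding psd_iff by auto
    then have y: "Re (Y $$ (0,0)) \<ge> 0" "Re (Y $$ (1,1)) \<ge> 0" using qf_unit[OF Yc] by auto
    show "psd_mat n (\<Psi> Y)" unfolding \<Psi>_def
      by (rule udu_psd[OF Uc], use y wp0 wn0 in auto)
  next
    fix Y assume Y: "hermitian_mat 2 Y"
    have Yc: "Y \<in> carrier_mat 2 2" using Y unfolding hermitian_mat_def by auto
    have Yh: "\<And>i j. i < 2 \<Longrightarrow> j < 2 \<Longrightarrow> Y $$ (i,j) = cnj (Y $$ (j,i))" using Y unfolding hermitian_iff by blast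
    have r: "Y $$ (i,i) = complex_of_real (Re (Y $$ (i,i)))" if i: "i < 2" for i
    proof -
      have "Im (Y $$ (i,i)) = Im (cnj (Y $$ (i,i)))" using Yh[OF i i] by (metis)
      then have "Im (Y $$ (i,i)) = 0" by simp
      then show ?thesis by (simp add: complex_eq_iff)
    qed
    have "mtrace Y = Y $$ (0,0) + Y $$ (1,1)" using Yc unfolding mtrace_def by (simp add: numeral_2_eq_2 lessThan_Suc)
    also have "\<dots> = complex_of_real (Re (Y $$ (0,0)) + Re (Y $$ (1,1)))" using r[of 0] r[of 1] by (metis of_real_add one_less_numeral_iff pos2 semiring_norm(76))
    finally have tY: "mtrace Y = complex_of_real (Re (Y $$ (0,0)) + Re (Y $$ (1,1)))" .
    have "mtrace (\<Psi> Y) = complex_of_real (\<Sum>i<n. Re (Y $$ (0,0)) * wp i + Re (Y $$ (1,1)) * wn i)"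
      unfolding \<Psi>_def by (rule mtrace_udu[OF U])
    also have "(\<Sum>i<n. Re (Y $$ (0,0)) * wp i + Re (Y $$ (1,1)) * wn i) = Re (Y $$ (0,0)) + Re (Y $$ (1,1))"
      by (simp add: sum.distrib sum_distrib_left[symmetric] wp1 wn1 del: One_nat_def)
    finally show "mtrace (\<Psi> Y) = mtrace Y" unfolding tY .
  qed
  define M where "M = diagm 2 (\<lambda>j. if j = 0 then a else - b)"
  have Mh: "hermitian_mat 2 M" unfolding M_def by (rule diagm_herm)
  have "\<Psi> M = U * diagm n d * mat_adjoint U"
  proof -
    have m: "Re (M $$ (0,0)) = a" "Re (M $$ (1,1)) = - b" unfolding M_def diagm_def by auto
    have "diagm n (\<lambda>i. a * wp i + (- b) * wn i) = diagm n d"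
    proof (rule diagm_cong)
      fix i assume i: "i < n"
      have "a * wp i = max (d i) 0" using wp(3)[OF i] unfolding wp_def .
      moreover have "b * wn i = max (- d i) 0" using wn(3)[OF i] unfolding wn_def .
      ultimately show "a * wp i + (- b) * wn i = d i" by simp
    qed
    then show ?thesis unfolding \<Psi>_def m by simp
  qed
  then have "\<Psi> M = A" using A by simp
  moreover have "\<mu> (\<Psi> M) \<le> \<mu> M" using mu n ptp Mh unfolding ptp_monotone_def by (metis zero_less_numeral)
  ultimately show ?thesis unfolding M_def a_def b_def by simp
qed


lemma reduce: assumes mu: "ptp_monotone \<mu>" and n: "0 < n" and A: "hermitian_mat n A"
  shows "\<mu> A = \<mu> (diagm 2 (\<lambda>j. if j = 0 then trace_norm (pos_part A) else - trace_norm (neg_part A)))"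
proof -
  obtain U d where U: "unitary n U" and Ad: "A = U * diagm n d * mat_adjoint U"
    using spectral[OF A] by blast
  have jc: "pos_part A = U * diagm n (\<lambda>i. max (d i) 0) * mat_adjoint U"
      "neg_part A = U * diagm n (\<lambda>i. max (- d i) 0) * mat_adjoint U"
    using jordan_char[OF U Ad] by auto
  have tp: "trace_norm (pos_part A) = (\<Sum>i<n. max (d i) 0)"
    unfolding jc by (rule trace_norm_udu[OF U], simp)
  have tn: "trace_norm (neg_part A) = (\<Sum>i<n. max (- d i) 0)"
    unfolding jc by (rule trace_norm_udu[OF U], simp)
  show ?thesis unfolding tp tn using phi_part[OF mu n U Ad] psi_part[OF mu n U Ad] by simp
qed

theorem mainTheorem13:
  fixes \<mu> :: "complex mat \<Rightarrow> real" and A B :: "complex mat" and n k :: nat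
  assumes "ptp_monotone \<mu>"
    and "0 < n" and "0 < k"
    and "hermitian_mat n A" and "hermitian_mat k B"
    and "trace_norm (pos_part A) = trace_norm (pos_part B)"
    and "trace_norm (neg_part A) = trace_norm (neg_part B)"
  shows "\<mu> A = \<mu> B"
  unfolding reduce[OF assms(1,2,4)] reduce[OF assms(1,3,5)] assms(6,7) ..

end
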